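(* Let $\mathfrak G$ be a Grassmann semialgebra over a commutative semiring $\mathcal A$ and an $\mathcal A$-module $V$. For any finitely many $\alpha_i\in\mathcal A$ and $a_i\in V$, $$\Bigl(\sum_i\alpha_ia_i\Bigr)^2\succeq_\circ\sum_i\alpha_i^2a_i^2 .$$
   Context: A Grassmann (exterior) semialgebra over $\mathcal A$ and $V$ is an associative $\mathcal A$-semialgebra $\mathfrak G$ (product written $\wedge$, $x^2=x\wedge x$) generated by $\mathcal A$ and $V$; $\mathfrak G_{\ge2}$ is the submodule generated by products of at least two elements of $V$; it carries a negation map $(-)$ on $\mathfrak G_{\ge2}$ (an additive bijection of order $\le2$ commuting with scalars) with $v_1\wedge v_2=(-)(v_2\wedge v_1)$ for all $v_1,v_2\in V$. A quasi-zero is an element $a+((-)a)$, and $a_1\succeq_\circ a_0$ means $a_1=a_0+d$ with $d$ a quasi-zero. *)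

theory Defs
  imports Main
begin

text \<open>Setting: the commutative semiring \<A> is a type 'a :: comm_semiring_1; the Grassmann
semialgebra \<G> is a type 'g carrying an associative semiring structure with unit
(class {semiring_0, monoid_mult}); the \<A>-action is a function sm; V is a subset of \<G>;
the negation map neg is a function that is only constrained on \<G>_{\<ge>2}.\<close>

inductive_set prods_ge2 :: "'g::{semiring_0,monoid_mult} set \<Rightarrow> 'g set" for V where
  two: "v \<in> V \<Longrightarrow> w \<in> V \<Longrightarrow> v * w \<in> prods_ge2 V"
| more: "v \<in> V \<Longrightarrow> p \<in> prods_ge2 V \<Longrightarrow> v * p \<in> prods_ge2 V"

inductive_set G_ge2 :: "('a \<Rightarrow> 'g \<Rightarrow> 'g) \<Rightarrow> 'g::{semiring_0,monoid_mult} set \<Rightarrow> 'g set"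
  for sm V where
  zero: "0 \<in> G_ge2 sm V"
| prod: "p \<in> prods_ge2 V \<Longrightarrow> p \<in> G_ge2 sm V"
| add: "x \<in> G_ge2 sm V \<Longrightarrow> y \<in> G_ge2 sm V \<Longrightarrow> x + y \<in> G_ge2 sm V"
| smul: "x \<in> G_ge2 sm V \<Longrightarrow> sm c x \<in> G_ge2 sm V"

inductive_set gen_alg :: "('a \<Rightarrow> 'g \<Rightarrow> 'g) \<Rightarrow> 'g::{semiring_0,monoid_mult} set \<Rightarrow> 'g set"
  for sm V where
  scal: "sm c 1 \<in> gen_alg sm V"
| vec: "v \<in> V \<Longrightarrow> v \<in> gen_alg sm V"
| add: "x \<in> gen_alg sm V \<Longrightarrow> y \<in> gen_alg sm V \<Longrightarrow> x + y \<in> gen_alg sm V"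
| mult: "x \<in> gen_alg sm V \<Longrightarrow> y \<in> gen_alg sm V \<Longrightarrow> x * y \<in> gen_alg sm V"
| smul: "x \<in> gen_alg sm V \<Longrightarrow> sm c x \<in> gen_alg sm V"

definition grassmann_semialgebra ::
  "('a::comm_semiring_1 \<Rightarrow> 'g \<Rightarrow> 'g) \<Rightarrow> 'g::{semiring_0,monoid_mult} set \<Rightarrow> ('g \<Rightarrow> 'g) \<Rightarrow> bool"
  where "grassmann_semialgebra sm V neg \<longleftrightarrow>
    \<comment> \<open>\<G> is an \<A>-module\<close>
    (\<forall>a b x. sm (a * b) x = sm a (sm b x)) \<and>
    (\<forall>a b x. sm (a + b) x = sm a x + sm b x) \<and>
    (\<forall>a x y. sm a (x + y) = sm a x + sm a y) \<and>
    (\<forall>x. sm 1 x = x) \<and> (\<forall>x. sm 0 x = 0) \<and> (\<forall>a. sm a 0 = 0) \<and>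
    \<comment> \<open>\<A>-semialgebra: scalars commute with the product\<close>
    (\<forall>a x y. sm a (x * y) = sm a x * y \<and> sm a (x * y) = x * sm a y) \<and>
    \<comment> \<open>V is an \<A>-submodule\<close>
    0 \<in> V \<and> (\<forall>v\<in>V. \<forall>w\<in>V. v + w \<in> V) \<and> (\<forall>a. \<forall>v\<in>V. sm a v \<in> V) \<and>
    \<comment> \<open>\<G> is generated by \<A> and V\<close>
    gen_alg sm V = UNIV \<and>
    \<comment> \<open>negation map on \<G>_{\<ge>2}\<close>
    (\<forall>x\<in>G_ge2 sm V. neg x \<in> G_ge2 sm V) \<and>
    bij_betw neg (G_ge2 sm V) (G_ge2 sm V) \<and>
    (\<forall>x\<in>G_ge2 sm V. \<forall>y\<in>G_ge2 sm V. neg (x + y) = neg x + neg y) \<and>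
    (\<forall>x\<in>G_ge2 sm V. neg (neg x) = x) \<and>
    (\<forall>a. \<forall>x\<in>G_ge2 sm V. neg (sm a x) = sm a (neg x)) \<and>
    (\<forall>v1\<in>V. \<forall>v2\<in>V. v1 * v2 = neg (v2 * v1))"

definition quasi_zero :: "('a \<Rightarrow> 'g \<Rightarrow> 'g) \<Rightarrow> 'g::{semiring_0,monoid_mult} set \<Rightarrow> ('g \<Rightarrow> 'g) \<Rightarrow> 'g \<Rightarrow> bool"
  where "quasi_zero sm V neg d \<longleftrightarrow> (\<exists>a\<in>G_ge2 sm V. d = a + neg a)"

definition succeq_circ :: "('a \<Rightarrow> 'g \<Rightarrow> 'g) \<Rightarrow> 'g::{semiring_0,monoid_mult} set \<Rightarrow> ('g \<Rightarrow> 'g) \<Rightarrow> 'g \<Rightarrow> 'g \<Rightarrow> bool"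
  where "succeq_circ sm V neg a1 a0 \<longleftrightarrow> (\<exists>d. quasi_zero sm V neg d \<and> a1 = a0 + d)"

end

theory Submission
  imports Defs
begin

theorem mainTheorem8:
  fixes sm :: "'a::comm_semiring_1 \<Rightarrow> 'g::{semiring_0,monoid_mult} \<Rightarrow> 'g"
    and V :: "'g set" and neg :: "'g \<Rightarrow> 'g"
    and I :: "'i set" and \<alpha> :: "'i \<Rightarrow> 'a" and a :: "'i \<Rightarrow> 'g"
  assumes "grassmann_semialgebra sm V neg"
    and "finite I"
    and "\<forall>i\<in>I. a i \<in> V"
  shows "succeq_circ sm V neg ((\<Sum>i\<in>I. sm (\<alpha> i) (a i)) ^ 2) (\<Sum>i\<in>I. sm ((\<alpha> i) ^ 2) ((a i) ^ 2))"
proof -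
  note G = assms(1)[unfolded grassmann_semialgebra_def]
  have smm0: "\<forall>a b x. sm (a * b) x = sm a (sm b x)" using G by (elim conjE) assumption
  have sm000: "\<forall>x. sm 0 x = 0" using G by (elim conjE) assumption
  have smlr: "\<forall>a x y. sm a (x * y) = sm a x * y \<and> sm a (x * y) = x * sm a y" using G by (elim conjE) assumption
  have V0: "0 \<in> V" using G by (elim conjE) assumption
  have Vadd0: "\<forall>v\<in>V. \<forall>w\<in>V. v + w \<in> V" using G by (elim conjE) assumption
  have Vsm0: "\<forall>a. \<forall>v\<in>V. sm a v \<in> V" using G by (elim conjE) assumption
  have nadd0: "\<forall>x\<in>G_ge2 sm V. \<forall>y\<in>G_ge2 sm V. neg (x + y) = neg x + neg y" using G by (elim conjE) assumption
  have nsm0: "\<forall>a. \<forall>x\<in>G_ge2 sm V. neg (sm a x) = sm a (neg x)" using G by (elim conjE) assumption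
  have anti0: "\<forall>v1\<in>V. \<forall>v2\<in>V. v1 * v2 = neg (v2 * v1)" using G by (elim conjE) assumption
  have smm: "\<And>c b x. sm (c * b) x = sm c (sm b x)" using smm0 by blast
  have sml: "\<And>c x y. sm c (x * y) = sm c x * y" using smlr by blast
  have smr: "\<And>c x y. sm c (x * y) = x * sm c y" using smlr by blast
  have sm00: "\<And>x. sm 0 x = 0" using sm000 by blast
  have Vadd: "\<And>v w. v \<in> V \<Longrightarrow> w \<in> V \<Longrightarrow> v + w \<in> V" using Vadd0 by blast
  have Vsm: "\<And>c v. v \<in> V \<Longrightarrow> sm c v \<in> V" using Vsm0 by blast
  have nadd: "\<And>x y. x \<in> G_ge2 sm V \<Longrightarrow> y \<in> G_ge2 sm V \<Longrightarrow> neg (x + y) = neg x + neg y"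
    using nadd0 by blast
  have nsm: "\<And>c x. x \<in> G_ge2 sm V \<Longrightarrow> neg (sm c x) = sm c (neg x)" using nsm0 by blast
  have anti: "\<And>v w. v \<in> V \<Longrightarrow> w \<in> V \<Longrightarrow> v * w = neg (w * v)" using anti0 by blast
  have neg0: "neg 0 = 0"
  proof -
    have "neg 0 = neg (sm 0 0)" by (simp add: sm00)
    also have "\<dots> = sm 0 (neg 0)" by (rule nsm) (rule G_ge2.zero)
    finally show ?thesis by (simp add: sm00)
  qed
  have sq: "\<And>i. sm (\<alpha> i) (a i) ^ 2 = sm ((\<alpha> i) ^ 2) ((a i) ^ 2)"
    by (simp only: power2_eq_square smm sml[symmetric] smr[symmetric])
  have "\<forall>i\<in>I. a i \<in> V \<Longrightarrow> (\<Sum>i\<in>I. sm (\<alpha> i) (a i)) \<in> V \<and>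
     (\<exists>b\<in>G_ge2 sm V. (\<Sum>i\<in>I. sm (\<alpha> i) (a i)) ^ 2 = (\<Sum>i\<in>I. sm ((\<alpha> i) ^ 2) ((a i) ^ 2)) + (b + neg b))"
    using assms(2)
  proof (induction I rule: finite_induct)
    case empty
    show ?case using V0 neg0 by (auto simp: power2_eq_square intro!: bexI[of _ 0] G_ge2.zero)
  next
    case (insert k F)
    define x where "x = sm (\<alpha> k) (a k)"
    define S where "S = (\<Sum>i\<in>F. sm (\<alpha> i) (a i))"
    from insert obtain b where SV: "S \<in> V" and b: "b \<in> G_ge2 sm V"
      and eq: "S ^ 2 = (\<Sum>i\<in>F. sm ((\<alpha> i) ^ 2) ((a i) ^ 2)) + (b + neg b)"
      unfolding S_def by auto
    have xV: "x \<in> V" unfolding x_def using insert.prems by (auto intro: Vsm)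
    have y: "x * S \<in> G_ge2 sm V" by (intro G_ge2.prod prods_ge2.two xV SV)
    have yn: "S * x = neg (x * S)" using anti SV xV by blast
    have "(x + S) ^ 2 = x^2 + (x * S + S * x) + S^2"
      by (simp add: power2_eq_square algebra_simps)
    also have "\<dots> = x^2 + (\<Sum>i\<in>F. sm ((\<alpha> i) ^ 2) ((a i) ^ 2)) + ((b + x * S) + neg (b + x * S))"
      using eq yn nadd[OF b y] by (simp add: algebra_simps)
    finally have "(x + S) ^ 2 = x^2 + (\<Sum>i\<in>F. sm ((\<alpha> i) ^ 2) ((a i) ^ 2)) + ((b + x * S) + neg (b + x * S))" .
    moreover have "b + x * S \<in> G_ge2 sm V" using b y by (rule G_ge2.add)
    ultimately show ?case using insert.hyps SV xV Vadd sq
      unfolding x_def S_def by auto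
  qed
  then obtain b where "b\<in>G_ge2 sm V" and "(\<Sum>i\<in>I. sm (\<alpha> i) (a i)) ^ 2 = (\<Sum>i\<in>I. sm ((\<alpha> i) ^ 2) ((a i) ^ 2)) + (b + neg b)"
    using assms(3) by blast
  then show ?thesis unfolding succeq_circ_def quasi_zero_def by blast
qed

end
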